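(* Let $T$ be a real-valued treatment and $X$ covariates, with conditional density $p(t\mid x)$ of $T$ given $X=x$. Let $S_k=[a_k,a_k+\ell)$ be bins of common length $\ell$ with midpoints $c_k = a_k+\ell/2$, and define \[ r_k(t\mid x) = \frac{p(t\mid x)\,\mathbf 1(t\in S_k)}{\int_{S_k} p(s\mid x)\,ds}. \] Assume $f$ and $p(t\mid x)$ are twice continuously differentiable, the conditional density $p(t\mid x)$ is positive, and $|f''|\le M$ for some $M>0$. Then for every $x$ and uniformly in $k$, \[ \int f(t)\, r_k(t\mid x)\,dt = f(c_k) + O(\ell^2) \quad \text{as } \ell\to 0. \] *)

theory Defs
  imports "HOL-Analysis.Analysis"
begin

definition C2 :: "(real \<Rightarrow> real) \<Rightarrow> bool" where
  "C2 g \<longleftrightarrow> (\<exists>g1 g2. (\<forall>t. (g has_real_derivative g1 t) (at t)) \<and>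
                      (\<forall>t. (g1 has_real_derivative g2 t) (at t)) \<and>
                      continuous_on UNIV g2)"

definition bin :: "real \<Rightarrow> real \<Rightarrow> real set" where
  "bin a l = {a..<a+l}"

definition bin_density :: "('x \<Rightarrow> real \<Rightarrow> real) \<Rightarrow> 'x \<Rightarrow> real \<Rightarrow> real \<Rightarrow> real \<Rightarrow> real" where
  "bin_density p x a l t = p x t * indicator (bin a l) t / integral (bin a l) (\<lambda>s. p x s)"

end

theory Submission imports Defs begin

lemma lip:
  fixes g g' :: "real \<Rightarrow> real"
  assumes d: "\<And>t. (g has_real_derivative g' t) (at t)"
    and b: "\<And>t. t \<in> {u..v} \<Longrightarrow> \<bar>g' t\<bar> \<le> B"
    and x: "x \<in> {u..v}" and y: "y \<in> {u..v}"
  shows "\<bar>g x - g y\<bar> \<le> B * \<bar>x - y\<bar>"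
proof -
  have key: "\<bar>g s - g r\<bar> \<le> B * (s - r)" if "r < s" "r \<in> {u..v}" "s \<in> {u..v}" for r s
  proof -
    obtain z where z: "r < z" "z < s" "g s - g r = (s - r) * g' z"
      using MVT2[OF \<open>r < s\<close>, of g g'] d by blast
    have "z \<in> {u..v}" using z that by auto
    then have "\<bar>g' z\<bar> \<le> B" by (rule b)
    then show ?thesis using z \<open>r < s\<close> by (simp add: abs_mult mult.commute mult_right_mono)
  qed
  consider "x < y" | "x = y" | "y < x" by linarith
  then show ?thesis
  proof cases
    case 1 then show ?thesis using key[OF 1 x y] by (simp add: abs_minus_commute)
  next
    case 2 then show ?thesis by simp
  next
    case 3 then show ?thesis using key[OF 3 y x] by simp
  qed
qed

lemma int_lin0:
  fixes a l :: real assumes "0 < l"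
  shows "integral {a..a+l} (\<lambda>t. t - (a + l/2)) = 0"
proof -
  have "((\<lambda>t. t - (a + l/2)) has_integral ((\<lambda>t. (t - (a + l/2))^2/2) (a+l) - (\<lambda>t. (t - (a + l/2))^2/2) a)) {a..a+l}"
    apply (rule fundamental_theorem_of_calculus)
    using assms apply simp
    apply (auto simp: has_real_derivative_iff_has_vector_derivative[symmetric] intro!: derivative_eq_intros)
    done
  moreover have "(\<lambda>t. (t - (a + l/2))^2/2) (a+l) - (\<lambda>t. (t - (a + l/2))^2/2) a = 0"
    by (simp add: power2_eq_square field_simps)
  ultimately show ?thesis by (simp add: integral_unique)
qed
lemma core:
  fixes f g1 g2 pp q :: "real \<Rightarrow> real"
  assumes df: "\<And>t. (f has_real_derivative g1 t) (at t)"
   and d1: "\<And>t. (g1 has_real_derivative g2 t) (at t)"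
   and M: "\<And>t. \<bar>g2 t\<bar> \<le> M"
   and dp: "\<And>t. (pp has_real_derivative q t) (at t)"
   and qL: "\<And>t. t \<in> {lo..hi} \<Longrightarrow> \<bar>q t\<bar> \<le> L"
   and pm: "\<And>t. t \<in> {lo..hi} \<Longrightarrow> m \<le> pp t" and m: "m > 0"
   and gF: "\<And>t. t \<in> {lo..hi} \<Longrightarrow> \<bar>g1 t\<bar> \<le> F"
   and l: "0 < l" "lo \<le> a" "a + l \<le> hi"
  shows "\<bar>integral UNIV (\<lambda>t. f t * (pp t * indicator (bin a l) t / integral (bin a l) pp)) - f (a + l/2)\<bar>
          \<le> (M/4 + F*L/(4*m)) * l^2"
proof -
  define c where "c = a + l/2"
  define S where "S = {a..a+l}"
  have cS: "c \<in> {lo..hi}" using l unfolding c_def by auto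
  have SS: "S \<subseteq> {lo..hi}" using l unfolding S_def by auto
  have Fnn: "0 \<le> F" using gF[OF cS] by linarith
  have Lnn: "0 \<le> L" using qL[OF cS] by linarith
  have cf: "continuous_on S f" using df
    by (meson DERIV_isCont continuous_at_imp_continuous_on)
  have cp: "continuous_on S pp" using dp
    by (meson DERIV_isCont continuous_at_imp_continuous_on)
  have bS: "integral (bin a l) g = integral S g" for g :: "real \<Rightarrow> real"
  proof -
    have "S - bin a l = {a+l}" using l unfolding S_def bin_def by auto
    then have "negligible (S - bin a l)" by simp
    moreover have "bin a l \<subseteq> S" unfolding S_def bin_def by auto
    ultimately show ?thesis using integral_subset_negligible by blast
  qed
  define P where "P = integral S pp"
  define I where "I = integral S (\<lambda>t. f t * pp t)"
  have ipp: "pp integrable_on S" unfolding S_def using cp S_def integrable_continuous_interval by blast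
  have ifp: "(\<lambda>t. f t * pp t) integrable_on S" unfolding S_def
    by (intro integrable_continuous_interval continuous_intros) (use cp cf S_def in auto)
  have Pge: "m * l \<le> P"
  proof -
    have "integral S (\<lambda>_. m) \<le> P" unfolding P_def
      by (intro integral_le ipp) (use pm SS in \<open>auto simp: S_def\<close>)
    moreover have "integral S (\<lambda>_. m) = m * l" using l unfolding S_def by simp
    ultimately show ?thesis by simp
  qed
  have Ppos: "P > 0" using Pge m l by (smt (verit) mult_pos_pos)
  have lhs: "integral UNIV (\<lambda>t. f t * (pp t * indicator (bin a l) t / integral (bin a l) pp)) = I / P"
  proof -
    have "integral UNIV (\<lambda>t. f t * (pp t * indicator (bin a l) t / integral (bin a l) pp))
        = integral UNIV (\<lambda>t. if t \<in> bin a l then f t * pp t / P else 0)"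
      by (intro arg_cong[where f="integral UNIV"] ext) (simp add: bS P_def indicator_def)
    also have "\<dots> = integral (bin a l) (\<lambda>t. f t * pp t / P)" by (rule integral_restrict_UNIV)
    also have "\<dots> = integral S (\<lambda>t. f t * pp t / P)" by (rule bS)
    also have "\<dots> = I / P" unfolding I_def by simp
    finally show ?thesis .
  qed
  define E where "E = (\<lambda>t. (f t - f c) * pp t - g1 c * pp c * (t - c))"
  define R where "R = (\<lambda>t. M * (l/2)^2 * pp t + F * L * (l/2)^2)"
  have ptw: "\<bar>E t\<bar> \<le> R t" if tS: "t \<in> S" for t
  proof -
    have tc: "\<bar>t - c\<bar> \<le> l/2" using tS unfolding S_def c_def atLeastAtMost_iff by arith
    have g1l: "\<bar>g1 s - g1 c\<bar> \<le> M * \<bar>s - c\<bar>" for s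
      by (rule lip[OF d1, of "min s c" "max s c"]) (use M in auto)
    have hb: "\<bar>(f t - g1 c * t) - (f c - g1 c * c)\<bar> \<le> (M * \<bar>t - c\<bar>) * \<bar>t - c\<bar>"
    proof (rule lip[of _ "\<lambda>s. g1 s - g1 c" "min t c" "max t c"])
      show "((\<lambda>s. f s - g1 c * s) has_real_derivative g1 s - g1 c) (at s)" for s
        by (auto intro!: derivative_eq_intros df)
      show "\<bar>g1 s - g1 c\<bar> \<le> M * \<bar>t - c\<bar>" if "s \<in> {min t c..max t c}" for s
      proof -
        have "\<bar>s - c\<bar> \<le> \<bar>t - c\<bar>" using that by auto
        then have "M * \<bar>s - c\<bar> \<le> M * \<bar>t - c\<bar>" using M[of 0] by (intro mult_left_mono) auto
        then show ?thesis using g1l[of s] by linarith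
      qed
    qed auto
    have Mnn: "0 \<le> M" using M[of 0] by linarith
    have "(M * \<bar>t - c\<bar>) * \<bar>t - c\<bar> \<le> M * (l/2)^2"
    proof -
      have "\<bar>t - c\<bar> * \<bar>t - c\<bar> \<le> (l/2) * (l/2)" using tc l by (intro mult_mono) auto
      then show ?thesis using Mnn by (simp add: power2_eq_square mult.assoc mult_left_mono)
    qed
    then have h: "\<bar>f t - f c - g1 c * (t - c)\<bar> \<le> M * (l/2)^2" using hb by (simp add: algebra_simps)
    have pl: "\<bar>pp t - pp c\<bar> \<le> L * \<bar>t - c\<bar>"
      by (rule lip[OF dp qL]) (use SS tS cS in auto)
    have ppos: "0 < pp t" using pm[of t] SS tS m by force
    have e: "E t = (f t - f c - g1 c * (t - c)) * pp t + g1 c * (t - c) * (pp t - pp c)"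
      unfolding E_def by (simp add: algebra_simps)
    have t1: "\<bar>(f t - f c - g1 c * (t - c)) * pp t\<bar> \<le> M * (l/2)^2 * pp t"
      using h ppos by (simp add: abs_mult mult_right_mono)
    have "\<bar>g1 c\<bar> * \<bar>t - c\<bar> * \<bar>pp t - pp c\<bar> \<le> F * (l/2) * (L * (l/2))"
    proof (intro mult_mono)
      show "\<bar>g1 c\<bar> \<le> F" using gF[OF cS] .
      show "\<bar>pp t - pp c\<bar> \<le> L * (l / 2)" using pl tc Lnn
        by (meson mult_left_mono order_trans)
    qed (use tc Fnn Lnn l in auto)
    moreover have "\<bar>g1 c * (t - c) * (pp t - pp c)\<bar> = \<bar>g1 c\<bar> * \<bar>t - c\<bar> * \<bar>pp t - pp c\<bar>"
      by (simp add: abs_mult)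
    moreover have "F * (l/2) * (L * (l/2)) = F * L * (l/2)^2" by (simp add: power2_eq_square)
    ultimately have t2: "\<bar>g1 c * (t - c) * (pp t - pp c)\<bar> \<le> F * L * (l/2)^2"
      by linarith
    show ?thesis unfolding e R_def using t1 t2 by linarith
  qed
  have iE: "E integrable_on S" unfolding E_def S_def
    by (intro integrable_continuous_interval continuous_intros) (use cp cf S_def in auto)
  have iR: "R integrable_on S" unfolding R_def S_def
    by (intro integrable_continuous_interval continuous_intros) (use cp S_def in auto)
  have intE: "integral S E = I - f c * P"
  proof -
    have "integral S E = integral S (\<lambda>t. f t * pp t - f c * pp t) - integral S (\<lambda>t. g1 c * pp c * (t - c))"
      unfolding E_def
      by (subst integral_diff[symmetric]) (auto intro!: integrable_continuous_interval continuous_intros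
          simp: S_def algebra_simps intro: continuous_on_subset[OF cp] continuous_on_subset[OF cf] cp[unfolded S_def] cf[unfolded S_def])
    also have "integral S (\<lambda>t. f t * pp t - f c * pp t) = I - f c * P"
    proof -
      have "(\<lambda>t. f c * pp t) integrable_on S" using integrable_on_cmult_left[OF ipp, of "f c"] by simp
      then show ?thesis unfolding I_def P_def using ifp by (simp add: integral_diff)
    qed
    also have "integral S (\<lambda>t. g1 c * pp c * (t - c)) = 0"
      using int_lin0[OF l(1), of a] unfolding S_def c_def by simp
    finally show ?thesis by simp
  qed
  have intR: "integral S R = M * (l/2)^2 * P + F * L * (l/2)^2 * l"
  proof -
    have i1: "(\<lambda>t. M * (l/2)^2 * pp t) integrable_on S" using integrable_on_cmult_left[OF ipp, of "M*(l/2)^2"] by simp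
    have i2: "(\<lambda>t. F * L * (l/2)^2) integrable_on S" unfolding S_def by (rule integrable_const_ivl)
    show ?thesis unfolding R_def P_def integral_add[OF i1 i2] using l by (simp add: S_def)
  qed
  have "\<bar>I - f c * P\<bar> \<le> M * (l/2)^2 * P + F * L * (l/2)^2 * l"
    using integral_norm_bound_integral[OF iE iR] ptw intE intR by simp
  then have "\<bar>I / P - f c\<bar> \<le> (M * (l/2)^2 * P + F * L * (l/2)^2 * l) / P"
    using Ppos by (simp add: divide_simps abs_divide)
  also have "\<dots> = M * (l/2)^2 + F * L * (l/2)^2 * l / P" using Ppos by (simp add: field_simps)
  also have "\<dots> \<le> M * (l/2)^2 + F * L * (l/2)^2 * l / (m * l)"
    using Pge m l Fnn Lnn Ppos by (intro add_left_mono divide_left_mono) auto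
  also have "\<dots> = (M/4 + F*L/(4*m)) * l^2" using m l by (simp add: field_simps power2_eq_square)
  finally show ?thesis using lhs c_def by simp
qed

theorem lemma1:
  fixes f :: "real \<Rightarrow> real" and p :: "'x \<Rightarrow> real \<Rightarrow> real" and M :: real
  assumes "C2 f"
    and "\<And>x. C2 (p x)"
    and "\<And>x t. p x t > 0"
    and "M > 0"
    and "\<And>t. \<bar>deriv (deriv f) t\<bar> \<le> M"
  shows "\<forall>x lo hi. \<exists>C \<delta>. \<delta> > 0 \<and>
           (\<forall>l a. 0 < l \<and> l < \<delta> \<and> lo \<le> a \<and> a + l \<le> hi \<longrightarrow>
              \<bar>integral UNIV (\<lambda>t. f t * bin_density p x a l t) - f (a + l / 2)\<bar> \<le> C * l\<^sup>2)"
proof (intro allI)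
  fix x lo hi
  obtain g1 g2 where df: "\<And>t. (f has_real_derivative g1 t) (at t)"
    and d1: "\<And>t. (g1 has_real_derivative g2 t) (at t)"
    using assms(1) unfolding C2_def by blast
  obtain q q2 where dp: "\<And>t. (p x has_real_derivative q t) (at t)"
    and dq: "\<And>t. (q has_real_derivative q2 t) (at t)"
    using assms(2)[of x] unfolding C2_def by blast
  have "deriv f = g1" using df DERIV_imp_deriv by blast
  then have M: "\<bar>g2 t\<bar> \<le> M" for t using assms(5)[of t] d1 DERIV_imp_deriv by metis
  show "\<exists>C \<delta>. \<delta> > 0 \<and>
           (\<forall>l a. 0 < l \<and> l < \<delta> \<and> lo \<le> a \<and> a + l \<le> hi \<longrightarrow>
              \<bar>integral UNIV (\<lambda>t. f t * bin_density p x a l t) - f (a + l / 2)\<bar> \<le> C * l\<^sup>2)"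
  proof (cases "lo \<le> hi")
    case False
    then show ?thesis by (intro exI[of _ 0] exI[of _ 1]) auto
  next
    case True
    define K where "K = {lo..hi}"
    have K: "compact K" "K \<noteq> {}" using True unfolding K_def by auto
    have cq: "continuous_on K (\<lambda>t. \<bar>q t\<bar>)"
      by (intro continuous_intros continuous_at_imp_continuous_on ballI DERIV_isCont[OF dq])
    have cg: "continuous_on K (\<lambda>t. \<bar>g1 t\<bar>)"
      by (intro continuous_intros continuous_at_imp_continuous_on ballI DERIV_isCont[OF d1])
    have cp: "continuous_on K (p x)"
      by (intro continuous_at_imp_continuous_on ballI DERIV_isCont[OF dp])
    obtain t1 where t1: "\<And>t. t \<in> K \<Longrightarrow> \<bar>q t\<bar> \<le> \<bar>q t1\<bar>"
      using continuous_attains_sup[OF K cq] by blast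
    obtain t2 where t2: "\<And>t. t \<in> K \<Longrightarrow> \<bar>g1 t\<bar> \<le> \<bar>g1 t2\<bar>"
      using continuous_attains_sup[OF K cg] by blast
    obtain t3 where t3: "\<And>t. t \<in> K \<Longrightarrow> p x t3 \<le> p x t"
      using continuous_attains_inf[OF K cp] by blast
    have m: "p x t3 > 0" using assms(3) by blast
    define C where "C = M/4 + \<bar>g1 t2\<bar> * \<bar>q t1\<bar> / (4 * p x t3)"
    have main: "\<forall>l a. 0 < l \<and> l < 1 \<and> lo \<le> a \<and> a + l \<le> hi \<longrightarrow>
              \<bar>integral UNIV (\<lambda>t. f t * bin_density p x a l t) - f (a + l / 2)\<bar> \<le> C * l\<^sup>2"
    proof (intro allI impI)
      fix l a assume la: "0 < l \<and> l < 1 \<and> lo \<le> a \<and> a + l \<le> hi"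
      have "\<bar>integral UNIV (\<lambda>t. f t * (p x t * indicator (bin a l) t / integral (bin a l) (p x))) - f (a + l/2)\<bar>
          \<le> (M/4 + \<bar>g1 t2\<bar> * \<bar>q t1\<bar> / (4 * p x t3)) * l^2"
        by (rule core[OF df d1 M dp, where lo=lo and hi=hi and L="\<bar>q t1\<bar>" and F="\<bar>g1 t2\<bar>" and m="p x t3"]) (use t1 t2 t3 la K_def m in auto)
      then show "\<bar>integral UNIV (\<lambda>t. f t * bin_density p x a l t) - f (a + l / 2)\<bar> \<le> C * l\<^sup>2"
        unfolding bin_density_def C_def by simp
    qed
    show ?thesis
      by (rule exI[of _ C], rule exI[of _ 1]) (simp add: main)
  qed
qed

end
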